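(* Let $V=\mathbb{C}x+\mathbb{C}y+\mathbb{C}z$ with the action of the Heisenberg group $H_3$ given by $e_1\cdot x=z,\ e_1\cdot y=x,\ e_1\cdot z=y$, $e_2\cdot x=x,\ e_2\cdot y=\omega y,\ e_2\cdot z=\omega^2 z$ ($\omega$ a primitive third root of unity), extended diagonally to tensor powers. For $p=[a:b:c]\in\mathbb{P}^2$ let $W_p\subset V\otimes V$ be the span of $ayz+bzy+cx^2,\ azx+bxz+cy^2,\ axy+byx+cz^2$. Then for each $p\in\{[1:0:0],[0:1:0],[0:0:1]\}$ (the vertices of $\mathbf{V}(abc)$), one has $W_p\otimes V\cap V\otimes W_p\cong \chi_{0,0}\oplus\chi_{1,0}\oplus\chi_{2,0}$ as $H_3$-representations; in particular $(W_p\otimes V\cap V\otimes W_p)^{H_3}$ is 1-dimensional.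
   Context: $H_3=\langle e_1,e_2\mid [e_1,e_2]\text{ central},\ e_1^3=e_2^3=1\rangle$. $\chi_{a,b}$ is the 1-dimensional representation with $\chi_{a,b}(e_1)=\omega^a$, $\chi_{a,b}(e_2)=\omega^b$. The intersection is taken inside $V\otimes V\otimes V$. *)

theory Defs
  imports "HOL-Analysis.Analysis"
begin

(* V = C x + C y + C z is modelled as complex^3; index 0,1,2 :: 3 stand for x,y,z.
   V (x) V is complex^(3*3), V (x) V (x) V is complex^(3*3*3) (coefficients w.r.t.
   the monomial basis), with complex scalar multiplication *s. *)

type_synonym vecV = "complex ^ 3"
type_synonym ten2 = "complex ^ (3 \<times> 3)"
type_synonym ten3 = "complex ^ (3 \<times> 3 \<times> 3)"

(* elementary tensor basis of V (x) V *)
definition E2 :: "3 \<Rightarrow> 3 \<Rightarrow> ten2" where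
  "E2 i j = (\<chi> p. if p = (i, j) then 1 else 0)"

(* tensor products (w (x) v) and (v (x) w) in V (x) V (x) V *)
definition tens21 :: "ten2 \<Rightarrow> vecV \<Rightarrow> ten3" where
  "tens21 w v = (\<chi> p. case p of (i, j, k) \<Rightarrow> w $ (i, j) * v $ k)"

definition tens12 :: "vecV \<Rightarrow> ten2 \<Rightarrow> ten3" where
  "tens12 v w = (\<chi> p. case p of (i, j, k) \<Rightarrow> v $ i * w $ (j, k))"

(* W_p for p = [a:b:c]: span of a yz + b zy + c x^2, a zx + b xz + c y^2, a xy + b yx + c z^2 *)
definition Wp :: "complex \<Rightarrow> complex \<Rightarrow> complex \<Rightarrow> ten2 set" where
  "Wp a b c = vec.span
     { a *s E2 1 2 + b *s E2 2 1 + c *s E2 0 0,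
       a *s E2 2 0 + b *s E2 0 2 + c *s E2 1 1,
       a *s E2 0 1 + b *s E2 1 0 + c *s E2 2 2 }"

(* W (x) V  and  V (x) W  as subspaces of V (x) V (x) V *)
definition WtV :: "ten2 set \<Rightarrow> ten3 set" where
  "WtV W = vec.span {tens21 w v | w v. w \<in> W}"

definition VtW :: "ten2 set \<Rightarrow> ten3 set" where
  "VtW W = vec.span {tens12 v w | v w. w \<in> W}"

(* e2 acts on the basis vector with index i by the scalar pw omega i:
   x \<mapsto> x, y \<mapsto> omega y, z \<mapsto> omega^2 z *)
definition pw :: "complex \<Rightarrow> 3 \<Rightarrow> complex" where
  "pw \<omega> i = (if i = 0 then 1 else if i = 1 then \<omega> else \<omega> ^ 2)"

(* action of e1 on V: x \<mapsto> z, y \<mapsto> x, z \<mapsto> y, i.e. the coefficient of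
   basis vector i after the action is the old coefficient of basis vector i+1 *)
definition act1V :: "vecV \<Rightarrow> vecV" where
  "act1V v = (\<chi> i. v $ (i + 1))"

definition act2V :: "complex \<Rightarrow> vecV \<Rightarrow> vecV" where
  "act2V \<omega> v = (\<chi> i. pw \<omega> i * v $ i)"

(* diagonal actions on V (x) V (x) V *)
definition act1 :: "ten3 \<Rightarrow> ten3" where
  "act1 T = (\<chi> p. case p of (i, j, k) \<Rightarrow> T $ (i + 1, j + 1, k + 1))"

definition act2 :: "complex \<Rightarrow> ten3 \<Rightarrow> ten3" where
  "act2 \<omega> T = (\<chi> p. case p of (i, j, k) \<Rightarrow> pw \<omega> i * pw \<omega> j * pw \<omega> k * T $ (i, j, k))"

(* the representation chi_{0,0} (+) chi_{1,0} (+) chi_{2,0} on complex^3: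
   coordinate a carries chi_{a,0}: e1 acts by omega^a, e2 acts by omega^0 = 1 *)
definition chiSum_e1 :: "complex \<Rightarrow> vecV \<Rightarrow> vecV" where
  "chiSum_e1 \<omega> u = (\<chi> a. pw \<omega> a * u $ a)"

definition chiSum_e2 :: "complex \<Rightarrow> vecV \<Rightarrow> vecV" where
  "chiSum_e2 \<omega> u = u"

end

theory Submission imports Defs begin
lemma UNIV3: "(UNIV::3 set) = {0,1,2}"
proof -
  have "(3::3) = 0" by simp
  then show ?thesis using UNIV_3 by auto
qed

lemma lin: "Vector_Spaces.linear (*s) (*s) (f::vecV \<Rightarrow> ten3) \<longleftrightarrow> (\<forall>x y. f (x + y) = f x + f y) \<and> (\<forall>c x. f (c *s x) = c *s (f x))"
  by (simp add: Vector_Spaces.linear_iff vec.vector_space_axioms)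

lemma spanaxis:
  "vec.span ((\<lambda>q. axis q (1::complex)) ` {q. P q}) = {x :: complex^'n. \<forall>q. x$q \<noteq> 0 \<longrightarrow> P q}"
proof
  show "vec.span ((\<lambda>q. axis q (1::complex)) ` {q. P q}) \<subseteq> {x :: complex^'n. \<forall>q. x$q \<noteq> 0 \<longrightarrow> P q}"
    by (rule vec.span_minimal) (auto simp: vec.subspace_def axis_def split: if_splits, metis add_0)
  show "{x :: complex^'n. \<forall>q. x$q \<noteq> 0 \<longrightarrow> P q} \<subseteq> vec.span ((\<lambda>q. axis q (1::complex)) ` {q. P q})"
  proof
    fix x :: "complex^'n" assume x: "x \<in> {x. \<forall>q. x$q \<noteq> 0 \<longrightarrow> P q}"
    have "sum (\<lambda>i. (x$i) *s axis i 1) UNIV \<in> vec.span ((\<lambda>q. axis q (1::complex)) ` {q. P q})"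
    proof (rule vec.span_sum)
      fix i :: 'n
      show "(x$i) *s axis i 1 \<in> vec.span ((\<lambda>q. axis q (1::complex)) ` {q. P q})"
      proof (cases "x$i = 0")
        case True then show ?thesis by (simp add: vec.span_zero)
      next
        case False then have "P i" using x by auto
        then show ?thesis by (intro vec.span_scale vec.span_base) auto
      qed
    qed
    then show "x \<in> vec.span ((\<lambda>q. axis q (1::complex)) ` {q. P q})" by (simp add: basis_expansion)
  qed
qed

lemma WtV_char:
  "WtV {w. \<forall>i j. w$(i,j) \<noteq> 0 \<longrightarrow> R i j} = {T. \<forall>i j k. T$(i,j,k) \<noteq> 0 \<longrightarrow> R i j}"
proof
  show "WtV {w. \<forall>i j. w$(i,j) \<noteq> 0 \<longrightarrow> R i j} \<subseteq> {T. \<forall>i j k. T$(i,j,k) \<noteq> 0 \<longrightarrow> R i j}"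
    unfolding WtV_def
    by (rule vec.span_minimal) (auto simp: vec.subspace_def tens21_def, metis add_0)
  have "{T. \<forall>i j k. T$(i,j,k) \<noteq> 0 \<longrightarrow> R i j} = vec.span ((\<lambda>q. axis q (1::complex)) ` {q. case q of (i,j,k) \<Rightarrow> R i j})"
    by (subst spanaxis) auto
  also have "\<dots> \<subseteq> WtV {w. \<forall>i j. w$(i,j) \<noteq> 0 \<longrightarrow> R i j}"
    unfolding WtV_def
  proof (rule vec.span_mono, clarsimp)
    fix i j k assume r: "R i j"
    have "axis (i,j,k) 1 = tens21 (axis (i,j) 1) (axis k 1)"
      by (auto simp: vec_eq_iff tens21_def axis_def)
    then show "\<exists>w. (\<exists>v. axis (i, j, k) 1 = tens21 w v) \<and> (\<forall>i j. w $ (i, j) \<noteq> 0 \<longrightarrow> R i j)"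
      using r by (intro exI[of _ "axis (i,j) 1"] exI[of _ "axis k 1"] conjI) (auto simp: axis_def)
  qed
  finally show "{T. \<forall>i j k. T$(i,j,k) \<noteq> 0 \<longrightarrow> R i j} \<subseteq> WtV {w. \<forall>i j. w$(i,j) \<noteq> 0 \<longrightarrow> R i j}" .
qed

lemma VtW_char:
  "VtW {w. \<forall>i j. w$(i,j) \<noteq> 0 \<longrightarrow> R i j} = {T. \<forall>i j k. T$(i,j,k) \<noteq> 0 \<longrightarrow> R j k}"
proof
  show "VtW {w. \<forall>i j. w$(i,j) \<noteq> 0 \<longrightarrow> R i j} \<subseteq> {T. \<forall>i j k. T$(i,j,k) \<noteq> 0 \<longrightarrow> R j k}"
    unfolding VtW_def
    by (rule vec.span_minimal) (auto simp: vec.subspace_def tens12_def, metis add_0)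
  have "{T. \<forall>i j k. T$(i,j,k) \<noteq> 0 \<longrightarrow> R j k} = vec.span ((\<lambda>q. axis q (1::complex)) ` {q. case q of (i,j,k) \<Rightarrow> R j k})"
    by (subst spanaxis) auto
  also have "\<dots> \<subseteq> VtW {w. \<forall>i j. w$(i,j) \<noteq> 0 \<longrightarrow> R i j}"
    unfolding VtW_def
  proof (rule vec.span_mono, clarsimp)
    fix i j k assume r: "R j k"
    have "axis (i,j,k) 1 = tens12 (axis i 1) (axis (j,k) 1)"
      by (auto simp: vec_eq_iff tens12_def axis_def)
    then show "\<exists>v w. axis (i, j, k) 1 = tens12 v w \<and> (\<forall>i j. w $ (i, j) \<noteq> 0 \<longrightarrow> R i j)"
      using r by (intro exI[of _ "axis i 1"] exI[of _ "axis (j,k) 1"] conjI) (auto simp: axis_def)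
  qed
  finally show "{T. \<forall>i j k. T$(i,j,k) \<noteq> 0 \<longrightarrow> R j k} \<subseteq> VtW {w. \<forall>i j. w$(i,j) \<noteq> 0 \<longrightarrow> R i j}" .
qed

lemma E2_axis: "E2 i j = axis (i,j) 1"
  by (auto simp: E2_def axis_def vec_eq_iff)

lemma cases3: "(i::3) = 0 \<or> i = 1 \<or> i = 2"
  using UNIV3 by auto

lemma Wp_char:
  assumes "(a, b, c) \<in> {(1, 0, 0), (0, 1, 0), (0, 0, 1)}"
  shows "\<exists>e. Wp a b c = {w. \<forall>i j. w$(i,j) \<noteq> 0 \<longrightarrow> j = i + e}"
proof -
  have key: "Wp a b c = {w. \<forall>i j. w$(i,j) \<noteq> 0 \<longrightarrow> j = i + e}"
    if "{q. case q of (i,j) \<Rightarrow> j = i + e} = P" and "Wp a b c = vec.span ((\<lambda>q. axis q (1::complex)) ` P)" for e P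
    using that spanaxis[of "\<lambda>q. case q of (i,j) \<Rightarrow> j = i + e"] by auto
  have s1: "{q. case q of (i,j) \<Rightarrow> j = i + (1::3)} = {(1,2),(2,0),(0,1)}"
    using cases3 by fastforce
  have s2: "{q. case q of (i,j) \<Rightarrow> j = i + (2::3)} = {(2,1),(0,2),(1,0)}"
    using cases3 by fastforce
  have s3: "{q. case q of (i,j) \<Rightarrow> j = i + (0::3)} = {(1,1),(2,2),(0,0)}"
    using cases3 by fastforce
  from assms consider "a = 1 \<and> b = 0 \<and> c = 0" | "a = 0 \<and> b = 1 \<and> c = 0" | "a = 0 \<and> b = 0 \<and> c = 1" by auto
  then show ?thesis
  proof cases
    case 1 then show ?thesis by (intro exI[of _ 1] key[OF s1]) (simp add: Wp_def E2_axis insert_commute)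
  next
    case 2 then show ?thesis by (intro exI[of _ 2] key[OF s2]) (simp add: Wp_def E2_axis insert_commute)
  next
    case 3 then show ?thesis by (intro exI[of _ 0] key[OF s3]) (auto simp: Wp_def E2_axis insert_commute)
  qed
qed
lemma hp3: assumes "\<omega>^3 = 1" shows "pw \<omega> x * pw \<omega> (x+e) * pw \<omega> (x+e+e) = 1"
proof -
  have f: "\<omega> * \<omega>^2 = 1" "\<omega>^2 * \<omega> = 1" "\<omega> * \<omega> * \<omega> = 1" "\<omega>^6 = 1"
    using assms by algebra+
  show ?thesis using cases3[of x] cases3[of e]
    by (elim disjE) (simp_all add: pw_def f)
qed

lemma sum3: "(\<Sum>x\<in>(UNIV::3 set). f x) = f 0 + f 1 + f 2"
  unfolding UNIV3 by (simp add: add.assoc)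

lemma pwv: "pw \<omega> 0 = 1" "pw \<omega> 1 = \<omega>" "pw \<omega> 2 = \<omega>^2" "pw \<omega> 4 = \<omega>"
  "pw \<omega> (-1) = \<omega>^2" "pw \<omega> (-2) = \<omega>" "pw \<omega> (-4) = \<omega>^2" "pw \<omega> (-0) = 1"
proof -
  have "(4::3) = 1" "(-1::3) = 2" "(-2::3) = 1" "(-4::3) = 2" by simp_all
  then show "pw \<omega> 0 = 1" "pw \<omega> 1 = \<omega>" "pw \<omega> 2 = \<omega>^2" "pw \<omega> 4 = \<omega>"
  "pw \<omega> (-1) = \<omega>^2" "pw \<omega> (-2) = \<omega>" "pw \<omega> (-4) = \<omega>^2" "pw \<omega> (-0) = 1"
    by (simp_all add: pw_def)
qed

lemma pw_mult: assumes "\<omega>^3 = 1" shows "pw \<omega> (a*(t+1)) = pw \<omega> a * pw \<omega> (a*t)"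
proof -
  have f12: "\<omega> * \<omega>^2 = 1" "\<omega>^2 * \<omega> = 1"
    using assms by algebra+
  have f3: "\<omega> * \<omega> = \<omega>^2" by (simp add: power2_eq_square)
  have "\<omega>^2 * \<omega>^2 = (\<omega>^2 * \<omega>) * \<omega>" by (simp add: mult.assoc power2_eq_square)
  then have f4: "\<omega>^2 * \<omega>^2 = \<omega>" using f12 by simp
  note f = f12 f3 f4
  have f5: "\<omega>^4 = \<omega>" using f4 by (simp add: eval_nat_numeral)
  have n: "(2::3) * 2 = 1" "(2::3) + 1 = 0" "(1::3) + 1 = 2" "(2::3) * (2+1) = 0" "(1::3) * (2+1) = 0"
    "(3::3) = 0" "(6::3) = 0" by simp_all
  show ?thesis using cases3[of a] cases3[of t]
    apply (elim disjE) apply (simp_all add: pwv n) by (simp_all add: f f5)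
qed

lemma gf1: assumes w2: "\<omega>^2 + \<omega> + 1 = 0"
  shows "(\<Sum>t\<in>UNIV. (\<Sum>a\<in>UNIV. (u::vecV)$a * pw \<omega> (a*t)) * pw \<omega> (-(b*t)))/3 = u$b"
proof -
  let ?P = "\<lambda>b. (\<Sum>t\<in>UNIV. (\<Sum>a\<in>UNIV. (u::vecV)$a * pw \<omega> (a*t)) * pw \<omega> (-(b*t)))/3 = u$b"
  have "?P 0" apply (simp add: sum3 pwv) using w2 by algebra
  moreover have "?P 1" apply (simp add: sum3 pwv) using w2 by algebra
  moreover have "?P 2" apply (simp add: sum3 pwv) using w2 by algebra
  ultimately show ?thesis using cases3[of b] by auto
qed

lemma fg1: assumes w2: "\<omega>^2 + \<omega> + 1 = 0"
  shows "(\<Sum>a\<in>UNIV. ((\<Sum>t\<in>UNIV. (c t :: complex) * pw \<omega> (-(a*t))) / 3) * pw \<omega> (a*x)) = c x"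
proof -
  let ?P = "\<lambda>x. (\<Sum>a\<in>UNIV. (\<Sum>t\<in>UNIV. (c t :: complex) * pw \<omega> (-(a*t))) * pw \<omega> (a*x)) = 3 * c x"
  have "?P 0" apply (simp add: sum3 pwv) using w2 by algebra
  moreover have "?P 1" apply (simp add: sum3 pwv) using w2 by algebra
  moreover have "?P 2" apply (simp add: sum3 pwv) using w2 by algebra
  ultimately have "?P x" using cases3[of x] by auto
  moreover have "(\<Sum>a\<in>UNIV. ((\<Sum>t\<in>UNIV. (c t :: complex) * pw \<omega> (-(a*t))) / 3) * pw \<omega> (a*x))
     = (\<Sum>a\<in>UNIV. (\<Sum>t\<in>UNIV. (c t :: complex) * pw \<omega> (-(a*t))) * pw \<omega> (a*x)) / 3"
    (is "?L = ?R")
  proof -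
    have "?L = (\<Sum>a\<in>UNIV. (\<Sum>t\<in>UNIV. (c t :: complex) * pw \<omega> (-(a*t))) * pw \<omega> (a*x) / 3)"
      by (rule sum.cong) auto
    also have "\<dots> = ?R" by (rule sum_divide_distrib[symmetric])
    finally show ?thesis .
  qed
  ultimately show ?thesis by simp
qed

lemma vec3_eqI: "(\<And>i j k. (A::ten3)$(i,j,k) = B$(i,j,k)) \<Longrightarrow> A = B"
  unfolding vec_eq_iff by (metis prod_cases3)

lemma generic:
  fixes \<omega> :: complex and e :: 3
  assumes w3: "\<omega>^3 = 1" and w1: "\<omega> \<noteq> 1"
    and SD: "S = {T::ten3. \<forall>i j k. T$(i,j,k) \<noteq> 0 \<longrightarrow> j = i+e \<and> k = j+e}"
  shows "(\<exists>f :: vecV \<Rightarrow> ten3.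
            Vector_Spaces.linear (*s) (*s) f \<and> bij_betw f UNIV S \<and>
            (\<forall>u. f (chiSum_e1 \<omega> u) = act1 (f u)) \<and>
            (\<forall>u. f (chiSum_e2 \<omega> u) = act2 \<omega> (f u)))
       \<and> vec.dim {T \<in> S. act1 T = T \<and> act2 \<omega> T = T} = 1"
proof
  have w2: "\<omega>^2 + \<omega> + 1 = 0"
  proof -
    have "(\<omega> - 1) * (\<omega>^2 + \<omega> + 1) = 0" using w3 by algebra
    then show ?thesis using w1 by simp
  qed
  define f :: "vecV \<Rightarrow> ten3" where "f u = (\<chi> p. case p of (i,j,k) \<Rightarrow>
      if j = i+e \<and> k = j+e then (\<Sum>a\<in>UNIV. u$a * pw \<omega> (a*i)) else 0)" for u
  define g :: "ten3 \<Rightarrow> vecV" where "g T = (\<chi> a. (\<Sum>t\<in>UNIV. T$(t,t+e,t+e+e) * pw \<omega> (-(a*t))) / 3)" for T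
  have lf: "Vector_Spaces.linear (*s) (*s) f"
    unfolding lin
    by (auto simp: f_def vec_eq_iff sum.distrib distrib_right sum_distrib_left mult.assoc)
  have fS: "f u \<in> S" for u
    by (auto simp: SD f_def)
  have gf: "g (f u) = u" for u
  proof -
    have "g (f u) $ a = u $ a" for a
      using gf1[OF w2, of u a] by (simp add: g_def f_def)
    then show ?thesis by (simp add: vec_eq_iff)
  qed
  have fg: "f (g T) = T" if "T \<in> S" for T
  proof -
    have "f (g T) $ (i,j,k) = T $ (i,j,k)" for i j k
    proof (cases "j = i+e \<and> k = j+e")
      case True
      then have "f (g T) $ (i,j,k) = (\<Sum>a\<in>UNIV. g T $ a * pw \<omega> (a*i))" by (simp add: f_def)
      also have "\<dots> = T $ (i, i+e, i+e+e)"
        using fg1[OF w2, of "\<lambda>t. T $ (t, t+e, t+e+e)" i] by (simp add: g_def)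
      finally show ?thesis using True by simp
    next
      case False
      have "T $ (i,j,k) = 0" using False that unfolding SD by blast
      then show ?thesis unfolding f_def vec_lambda_beta prod.case if_not_P[OF False] by simp
    qed
    then show ?thesis by (simp add: vec_eq_iff)
  qed
  have bij: "bij_betw f UNIV S"
    by (rule bij_betw_byWitness[where f'=g]) (use gf fg fS in auto)
  have e1: "f (chiSum_e1 \<omega> u) = act1 (f u)" for u
  proof -
    have "f (chiSum_e1 \<omega> u) $ (i,j,k) = act1 (f u) $ (i,j,k)" for i j k
    proof -
      have c: "(j + 1 = i + 1 + e \<and> k + 1 = j + 1 + e) = (j = i + e \<and> k = j + e)"
        by (simp add: algebra_simps)
      show ?thesis
        by (simp add: f_def act1_def chiSum_e1_def c pw_mult[OF w3] mult.commute mult.left_commute)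
    qed
    then show ?thesis by (simp add: vec_eq_iff)
  qed
  have e2: "f (chiSum_e2 \<omega> u) = act2 \<omega> (f u)" for u
  proof -
    have "f u $ (i,j,k) = act2 \<omega> (f u) $ (i,j,k)" for i j k
      using hp3[OF w3, of i e] by (auto simp: f_def act2_def add.assoc)
    then show ?thesis by (simp add: vec_eq_iff chiSum_e2_def)
  qed
  show "\<exists>f :: vecV \<Rightarrow> ten3.
            Vector_Spaces.linear (*s) (*s) f \<and> bij_betw f UNIV S \<and>
            (\<forall>u. f (chiSum_e1 \<omega> u) = act1 (f u)) \<and>
            (\<forall>u. f (chiSum_e2 \<omega> u) = act2 \<omega> (f u))"
    using lf bij e1 e2 by blast
  define t0 :: ten3 where "t0 = (\<chi> p. case p of (i,j,k) \<Rightarrow> if j = i+e \<and> k = j+e then 1 else 0)"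
  have "{T \<in> S. act1 T = T \<and> act2 \<omega> T = T} = vec.span {t0}"
  proof
    show "vec.span {t0} \<subseteq> {T \<in> S. act1 T = T \<and> act2 \<omega> T = T}"
    proof
      fix T assume "T \<in> vec.span {t0}"
      then obtain c where T: "T = c *s t0" by (auto simp: vec.span_singleton)
      have c: "(j + 1 = i + 1 + e \<and> k + 1 = j + 1 + e) = (j = i + e \<and> k = j + e)" for i j k :: 3
        by (simp add: algebra_simps)
      have "act1 T = T" by (auto simp: vec_eq_iff T t0_def act1_def c)
      moreover have "act2 \<omega> T = T"
        using hp3[OF w3] by (auto simp: vec_eq_iff T t0_def act2_def add.assoc)
      moreover have "T \<in> S" by (auto simp: SD T t0_def)
      ultimately show "T \<in> {T \<in> S. act1 T = T \<and> act2 \<omega> T = T}" by auto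
    qed
    show "{T \<in> S. act1 T = T \<and> act2 \<omega> T = T} \<subseteq> vec.span {t0}"
    proof
      fix T assume T: "T \<in> {T \<in> S. act1 T = T \<and> act2 \<omega> T = T}"
      have step: "T $ (x+1, x+e+1, x+e+e+1) = T $ (x, x+e, x+e+e)" for x
      proof -
        have "act1 T $ (x, x+e, x+e+e) = T $ (x, x+e, x+e+e)" using T by simp
        then show ?thesis by (simp add: act1_def)
      qed
      have diag: "T $ (x, x+e, x+e+e) = T $ (0, e, e+e)" for x
      proof -
        have s1: "T $ (1, 1+e, 1+e+e) = T $ (0, e, e+e)" using step[of 0] by (simp add: add.commute add.left_commute)
        have s2: "T $ (2, 2+e, 2+e+e) = T $ (1, 1+e, 1+e+e)" using step[of 1] by (simp add: add.commute add.left_commute)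
        show ?thesis using cases3[of x] s1 s2 by auto
      qed
      have "T = T $ (0, e, e+e) *s t0"
      proof -
        have "T $ (i,j,k) = (T $ (0, e, e+e) *s t0) $ (i,j,k)" for i j k
        proof (cases "j = i+e \<and> k = j+e")
          case True then show ?thesis using diag[of i] by (simp add: t0_def)
        next
          case False
          have "T $ (i,j,k) = 0" using False T unfolding SD by blast
          then show ?thesis unfolding vector_smult_component t0_def vec_lambda_beta prod.case if_not_P[OF False] by simp
        qed
        then show ?thesis by (rule vec3_eqI)
      qed
      moreover have "T $ (0, e, e+e) *s t0 \<in> vec.span {t0}"
        by (intro vec.span_scale vec.span_base) simp
      ultimately show "T \<in> vec.span {t0}" by simp
    qed
  qed
  moreover have "t0 \<noteq> 0"
  proof
    assume "t0 = 0"
    then have "t0 $ (0, e, e+e) = 0" by simp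
    then show False by (simp add: t0_def)
  qed
  ultimately show "vec.dim {T \<in> S. act1 T = T \<and> act2 \<omega> T = T} = 1" by simp
qed
theorem mainTheorem6:
  fixes \<omega> a b c :: complex
  assumes "\<omega> ^ 3 = 1" and "\<omega> \<noteq> 1"
    and "(a, b, c) \<in> {(1, 0, 0), (0, 1, 0), (0, 0, 1)}"
  defines "S \<equiv> WtV (Wp a b c) \<inter> VtW (Wp a b c)"
  shows "(\<exists>f :: vecV \<Rightarrow> ten3.
            Vector_Spaces.linear (*s) (*s) f \<and> bij_betw f UNIV S \<and>
            (\<forall>u. f (chiSum_e1 \<omega> u) = act1 (f u)) \<and>
            (\<forall>u. f (chiSum_e2 \<omega> u) = act2 \<omega> (f u)))
       \<and> vec.dim {T \<in> S. act1 T = T \<and> act2 \<omega> T = T} = 1"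
proof -
  from Wp_char[OF assms(3)] obtain e where W: "Wp a b c = {w. \<forall>i j. w$(i,j) \<noteq> 0 \<longrightarrow> j = i+e}" by blast
  have "S = {T. \<forall>i j k. T$(i,j,k) \<noteq> 0 \<longrightarrow> j = i+e \<and> k = j+e}"
    unfolding S_def W WtV_char VtW_char by blast
  then show ?thesis by (rule generic[OF assms(1,2)])
qed

end
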